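(* In the closed-loop system of Controller 3 (see context), assume $\xi_i=0$ for all $i\neq k$ and $\xi_k>0$ for one index $k$. Then for every initial condition (with $\omega_i(t_0)=0$), $\phi_i-\bar\phi_i\to 0$ and $\dot\phi_i\to \xi_k/n$ as $t\to\infty$ for all $i=1,\dots,n$.
   Context: Controller 3: for $n\ge2$ robots with real-valued phases $\phi_i$ (indexed counterclockwise at the initial time), gains $k_\phi,k_\omega>0$ and nonnegative constants $\xi_i$, the phase dynamics are $\dot\omega_i=k_\omega(\bar\phi_i-\phi_i)$, $\omega_i(t_0)=0$, $\dot\phi_i=\omega_i+k_\phi(\bar\phi_i-\phi_i)+\xi_i$, where $\bar\phi_1=\frac{\phi_2+\phi_n-2\pi}{2}$, $\bar\phi_i=\frac{\phi_{i+1}+\phi_{i-1}}{2}$ for $2\le i\le n-1$, $\bar\phi_n=\frac{\phi_1+2\pi+\phi_{n-1}}{2}$. *)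

theory Defs
  imports "HOL-Analysis.Analysis"
begin

text \<open>Reference phase of robot i (indices 1..n) for Controller 3;
  phi i t is the phase of robot i at time t.\<close>
definition phibar :: "nat \<Rightarrow> (nat \<Rightarrow> real \<Rightarrow> real) \<Rightarrow> nat \<Rightarrow> real \<Rightarrow> real" where
  "phibar n phi i t =
     (if i = 1 then (phi 2 t + phi n t - 2 * pi) / 2
      else if i = n then (phi 1 t + 2 * pi + phi (n - 1) t) / 2
      else (phi (i + 1) t + phi (i - 1) t) / 2)"

end

theory Submission
  imports Defs "HOL-Real_Asymp.Real_Asymp"
begin


definition nx :: "nat \<Rightarrow> nat \<Rightarrow> nat" where "nx n i = (if i = n then 1 else Suc i)"
definition pv :: "nat \<Rightarrow> nat \<Rightarrow> nat" where "pv n i = (if i = 1 then n else i - 1)"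
definition Mv :: "nat \<Rightarrow> (nat \<Rightarrow> real) \<Rightarrow> nat \<Rightarrow> real" where
  "Mv n x i = x i - (x (nx n i) + x (pv n i)) / 2"
definition SS :: "nat \<Rightarrow> (nat \<Rightarrow> real) \<Rightarrow> (nat \<Rightarrow> real) \<Rightarrow> real" where
  "SS n x y = (\<Sum>i\<in>{1..n}. x i * y i)"

lemma nx_in: "n \<ge> 2 \<Longrightarrow> i \<in> {1..n} \<Longrightarrow> nx n i \<in> {1..n}"
  by (auto simp: nx_def)
lemma pv_in: "n \<ge> 2 \<Longrightarrow> i \<in> {1..n} \<Longrightarrow> pv n i \<in> {1..n}"
  by (auto simp: pv_def)
lemma pv_nx: "n \<ge> 2 \<Longrightarrow> i \<in> {1..n} \<Longrightarrow> pv n (nx n i) = i"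
  by (auto simp: pv_def nx_def)
lemma nx_pv: "n \<ge> 2 \<Longrightarrow> i \<in> {1..n} \<Longrightarrow> nx n (pv n i) = i"
  by (auto simp: pv_def nx_def)

lemma bij_nx: "n \<ge> 2 \<Longrightarrow> bij_betw (nx n) {1..n} {1..n}"
  by (rule bij_betw_byWitness[where f'="pv n"]) (auto simp: pv_nx nx_pv dest: nx_in pv_in)

lemma sum_nx: "n \<ge> 2 \<Longrightarrow> (\<Sum>i\<in>{1..n}. f (nx n i)) = (\<Sum>i\<in>{1..n}. (f i :: real))"
  using sum.reindex_bij_betw[OF bij_nx, of n f] by simp

lemma SS_sym: assumes "n \<ge> 2" shows "SS n x (Mv n y) = SS n (Mv n x) y"
proof -
  have a: "(\<Sum>i\<in>{1..n}. x i * y (nx n i)) = (\<Sum>i\<in>{1..n}. x (pv n i) * y i)"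
  proof -
    have "(\<Sum>i\<in>{1..n}. x i * y (nx n i)) = (\<Sum>i\<in>{1..n}. x (pv n (nx n i)) * y (nx n i))"
      by (rule sum.cong) (auto simp: pv_nx[OF assms])
    also have "\<dots> = (\<Sum>i\<in>{1..n}. x (pv n i) * y i)" by (rule sum_nx[OF assms])
    finally show ?thesis .
  qed
  have b: "(\<Sum>i\<in>{1..n}. x i * y (pv n i)) = (\<Sum>i\<in>{1..n}. x (nx n i) * y i)"
  proof -
    have "(\<Sum>i\<in>{1..n}. x (nx n i) * y i) = (\<Sum>i\<in>{1..n}. x (nx n i) * y (pv n (nx n i)))"
      by (rule sum.cong) (auto simp: pv_nx[OF assms])
    also have "\<dots> = (\<Sum>i\<in>{1..n}. x i * y (pv n i))" by (rule sum_nx[OF assms])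
    finally show ?thesis by simp
  qed
  have "SS n x (Mv n y) = (\<Sum>i\<in>{1..n}. x i * y i) - ((\<Sum>i\<in>{1..n}. x i * y (nx n i)) + (\<Sum>i\<in>{1..n}. x i * y (pv n i)))/2"
    by (simp add: SS_def Mv_def algebra_simps sum_subtractf sum.distrib flip: sum_divide_distrib)
  also have "\<dots> = (\<Sum>i\<in>{1..n}. x i * y i) - ((\<Sum>i\<in>{1..n}. x (pv n i) * y i) + (\<Sum>i\<in>{1..n}. x (nx n i) * y i))/2"
    using a b by simp
  also have "\<dots> = SS n (Mv n x) y"
    by (simp add: SS_def Mv_def algebra_simps sum_subtractf sum.distrib flip: sum_divide_distrib)
  finally show ?thesis .
qed

lemma SS_Mv_eq: assumes "n \<ge> 2"
  shows "SS n x (Mv n x) = (\<Sum>i\<in>{1..n}. (x (nx n i) - x i)^2) / 2"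
proof -
  have a: "(\<Sum>i\<in>{1..n}. x i * x (pv n i)) = (\<Sum>i\<in>{1..n}. x (nx n i) * x i)"
  proof -
    have "(\<Sum>i\<in>{1..n}. x (nx n i) * x i) = (\<Sum>i\<in>{1..n}. x (nx n i) * x (pv n (nx n i)))"
      by (rule sum.cong) (auto simp: pv_nx[OF assms])
    also have "\<dots> = (\<Sum>i\<in>{1..n}. x i * x (pv n i))" by (rule sum_nx[OF assms])
    finally show ?thesis by simp
  qed
  have c: "(\<Sum>i\<in>{1..n}. (x (nx n i))^2) = (\<Sum>i\<in>{1..n}. (x i)^2)"
    using sum_nx[OF assms, of "\<lambda>i. (x i)^2"] by simp
  have "SS n x (Mv n x) = (\<Sum>i\<in>{1..n}. (x i)^2) - ((\<Sum>i\<in>{1..n}. x i * x (nx n i)) + (\<Sum>i\<in>{1..n}. x i * x (pv n i)))/2"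
    by (simp add: SS_def Mv_def algebra_simps sum_subtractf sum.distrib power2_eq_square flip: sum_divide_distrib)
  also have "\<dots> = ((\<Sum>i\<in>{1..n}. (x (nx n i))^2) + (\<Sum>i\<in>{1..n}. (x i)^2) - 2 * (\<Sum>i\<in>{1..n}. x (nx n i) * x i)) / 2"
    using a c by (simp add: algebra_simps)
  also have "\<dots> = (\<Sum>i\<in>{1..n}. (x (nx n i) - x i)^2) / 2"
    by (simp add: power2_diff sum_subtractf sum.distrib sum_distrib_left algebra_simps)
  finally show ?thesis .
qed

lemma SS_Mv_nonneg: "n \<ge> 2 \<Longrightarrow> SS n x (Mv n x) \<ge> 0"
  by (simp add: SS_Mv_eq sum_nonneg)

lemma SS_self_nonneg: "SS n x x \<ge> 0"
  by (simp add: SS_def sum_nonneg)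

lemma SS_CS: "(SS n x y)^2 \<le> SS n x x * SS n y y"
  using Cauchy_Schwarz_ineq_sum[of x y "{1..n}"] by (simp add: SS_def power2_eq_square)

lemma poincare: assumes n: "n \<ge> 2" and s: "(\<Sum>i\<in>{1..n}. x i) = 0"
  shows "SS n x x \<le> 2 * real n ^ 2 * SS n x (Mv n x)"
proof -
  define T where "T = (\<Sum>i\<in>{1..n}. (x (nx n i) - x i)^2)"
  have T0: "(\<Sum>m\<in>{1..<n}. (x (Suc m) - x m)^2) \<le> T"
  proof -
    have "(\<Sum>m\<in>{1..<n}. (x (Suc m) - x m)^2) = (\<Sum>m\<in>{1..<n}. (x (nx n m) - x m)^2)"
      by (rule sum.cong) (auto simp: nx_def)
    also have "\<dots> \<le> T" unfolding T_def by (rule sum_mono2) auto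
    finally show ?thesis .
  qed
  have pt: "(x i - x 1)^2 \<le> real n * T" if i: "i \<in> {1..n}" for i
  proof -
    have "x i - x 1 = (\<Sum>m\<in>{1..<i}. x (Suc m) - x m)"
      using i by (simp add: sum_Suc_diff')
    hence "(x i - x 1)^2 \<le> (\<Sum>m\<in>{1..<i}. (x (Suc m) - x m)^2) * card {1..<i}"
      using sum_squared_le_sum_of_squares by metis
    also have "\<dots> \<le> (\<Sum>m\<in>{1..<n}. (x (Suc m) - x m)^2) * real n"
      apply (rule mult_mono)
      using i by (auto intro!: sum_mono2 sum_nonneg)
    also have "\<dots> \<le> T * real n" using T0 by (simp add: mult_right_mono)
    finally show ?thesis by (simp add: mult.commute)
  qed
  have "(\<Sum>i\<in>{1..n}. (x i - x 1)^2) = SS n x x + real n * (x 1)^2 - 2 * x 1 * (\<Sum>i\<in>{1..n}. x i)"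
    by (simp add: SS_def power2_diff sum_subtractf sum.distrib sum_distrib_left algebra_simps power2_eq_square)
  hence "SS n x x \<le> (\<Sum>i\<in>{1..n}. (x i - x 1)^2)" using s by simp
  also have "\<dots> \<le> (\<Sum>i\<in>{1..n}. real n * T)" by (rule sum_mono) (rule pt)
  also have "\<dots> = real n ^ 2 * T" by (simp add: power2_eq_square)
  also have "\<dots> = 2 * real n ^ 2 * SS n x (Mv n x)" by (simp add: SS_Mv_eq[OF n] T_def)
  finally show ?thesis .
qed



lemma SS_comm: "SS n x y = SS n y x" by (simp add: SS_def mult.commute)
lemma SS_diff_left: "SS n (\<lambda>i. x i - y i) w = SS n x w - SS n y w"
  by (simp add: SS_def algebra_simps sum_subtractf)
lemma SS_scale_left: "SS n (\<lambda>i. c * x i) w = c * SS n x w"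
  by (simp add: SS_def algebra_simps sum_distrib_left)
lemma SS_minus_left: "SS n (\<lambda>i. - x i) w = - SS n x w"
  by (simp add: SS_def sum_negf)
lemma SS_diff_right: "SS n w (\<lambda>i. x i - y i) = SS n w x - SS n w y"
  by (simp add: SS_def algebra_simps sum_subtractf)
lemma SS_scale_right: "SS n w (\<lambda>i. c * x i) = c * SS n w x"
  by (simp add: SS_def algebra_simps sum_distrib_left)
lemma SS_minus_right: "SS n w (\<lambda>i. - x i) = - SS n w x"
  by (simp add: SS_def sum_negf)
lemma Mv_lin: "Mv n (\<lambda>j. c * u j - d * v j) i = c * Mv n u i - d * Mv n v i"
  by (simp add: Mv_def field_simps)

lemma SS_deriv:
  assumes "\<And>i. i \<in> {1..n} \<Longrightarrow> ((\<lambda>s. f i s) has_real_derivative f' i) (at t within T)"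
    and "\<And>i. i \<in> {1..n} \<Longrightarrow> ((\<lambda>s. g i s) has_real_derivative g' i) (at t within T)"
  shows "((\<lambda>s. SS n (\<lambda>j. f j s) (\<lambda>j. g j s)) has_real_derivative
           SS n f' (\<lambda>j. g j t) + SS n (\<lambda>j. f j t) g') (at t within T)"
proof -
  have "((\<lambda>s. \<Sum>i\<in>{1..n}. f i s * g i s) has_real_derivative (\<Sum>i\<in>{1..n}. f' i * g i t + g' i * f i t)) (at t within T)"
    by (rule DERIV_sum) (rule DERIV_mult, auto intro: assms)
  thus ?thesis by (simp add: SS_def sum.distrib mult.commute)
qed

lemma Mv_deriv:
  assumes n: "n \<ge> 2" and i: "i \<in> {1..n}"
    and d: "\<And>j. j \<in> {1..n} \<Longrightarrow> ((\<lambda>s. f j s) has_real_derivative f' j) (at t within T)"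
  shows "((\<lambda>s. Mv n (\<lambda>j. f j s) i) has_real_derivative Mv n f' i) (at t within T)"
  unfolding Mv_def
  by (intro DERIV_diff DERIV_cdivide DERIV_add d i nx_in[OF n i] pv_in[OF n i])

lemma exp_decay:
  fixes V V' :: "real \<Rightarrow> real"
  assumes d: "\<And>t. t > t1 \<Longrightarrow> (V has_real_derivative V' t) (at t)"
    and le: "\<And>t. t > t1 \<Longrightarrow> V' t \<le> - \<delta> * V t"
  shows "\<exists>C. \<forall>t\<ge>t1+1. V t \<le> C * exp (- \<delta> * t)"
proof -
  define g where "g t = V t * exp (\<delta> * t)" for t
  have dg: "(g has_real_derivative (V' t * exp (\<delta> * t) + V t * (exp (\<delta> * t) * \<delta>))) (at t)" if "t > t1" for t
    unfolding g_def using d[OF that] by (auto intro!: derivative_eq_intros)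
  have gmono: "g t \<le> g (t1+1)" if "t \<ge> t1 + 1" for t
  proof (rule DERIV_nonpos_imp_decreasing_open[OF that])
    fix x assume x: "t1 + 1 < x" "x < t"
    have "V' x * exp (\<delta> * x) + V x * (exp (\<delta> * x) * \<delta>) = (V' x + \<delta> * V x) * exp (\<delta> * x)"
      by (simp add: algebra_simps)
    also have "\<dots> \<le> 0" using le[of x] x by (intro mult_nonpos_nonneg) auto
    finally show "\<exists>y. (g has_real_derivative y) (at x) \<and> y \<le> 0" using dg[of x] x by auto
  next
    show "continuous_on {t1+1..t} g"
      apply (rule DERIV_atLeastAtMost_imp_continuous_on)
      subgoal for x using dg[of x] by auto
      done
  qed
  hence "V t \<le> g (t1+1) * exp (- \<delta> * t)" if "t \<ge> t1+1" for t
  proof -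
    have "V t = g t * exp (- \<delta> * t)"
      by (simp add: g_def mult.assoc flip: exp_add)
    also have "\<dots> \<le> g (t1+1) * exp (- \<delta> * t)"
      by (rule mult_right_mono) (use gmono that in auto)
    finally show ?thesis .
  qed
  thus ?thesis by blast
qed


lemma sq_to_zero:
  fixes f :: "real \<Rightarrow> real"
  assumes d: "\<delta> > 0" and ev: "\<And>t. t \<ge> T \<Longrightarrow> (f t)^2 \<le> K * exp (- \<delta> * t)"
  shows "(f \<longlongrightarrow> 0) at_top"
proof -
  have l: "((\<lambda>t. K * exp (- \<delta> * t)) \<longlongrightarrow> 0) at_top" using d by real_asymp
  have "((\<lambda>t. (f t)^2) \<longlongrightarrow> 0) at_top"
    by (rule tendsto_sandwich[OF _ _ tendsto_const l]) (auto intro!: eventually_at_top_linorderI[of T] simp del: mult_minus_left dest: ev)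
  hence "((\<lambda>t. sqrt ((f t)^2)) \<longlongrightarrow> sqrt 0) at_top" by (rule tendsto_real_sqrt)
  hence "((\<lambda>t. \<bar>f t\<bar>) \<longlongrightarrow> 0) at_top" by simp
  thus ?thesis by (simp add: tendsto_rabs_zero_iff)
qed


lemma SS_quad: "SS n (\<lambda>j. u j + s * v j) (\<lambda>j. u j + s * v j) = SS n u u + 2 * s * SS n u v + s^2 * SS n v v"
  by (simp add: SS_def algebra_simps power2_eq_square sum.distrib sum_distrib_left)

lemma SS_quad2: "SS n (\<lambda>j. a * u j - b * v j) (\<lambda>j. a * u j - b * v j) = a^2 * SS n u u - 2 * a * b * SS n u v + b^2 * SS n v v"
  by (simp add: SS_def algebra_simps power2_eq_square sum.distrib sum_distrib_left sum_subtractf)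

lemma sq_le_SS: "i \<in> {1..n} \<Longrightarrow> (x i)^2 \<le> SS n x x"
  unfolding SS_def power2_eq_square by (rule member_le_sum) auto

lemma gen_ineq: "x \<le> p/2 + w \<Longrightarrow> w \<le> q/2 \<Longrightarrow> y \<le> x \<Longrightarrow> -x \<le> y \<Longrightarrow>
        (p + q)/2 \<le> p + q - y \<and> p + q - (y::real) \<le> 3*(p+q)/2"
  by argo

lemma lyap:
  fixes e z :: "nat \<Rightarrow> real \<Rightarrow> real" and a b t1 :: real
  assumes n: "n \<ge> 2" and a: "a > 0" and b: "b > 0"
  and de: "\<And>i t. i\<in>{1..n} \<Longrightarrow> t > t1 \<Longrightarrow> (e i has_real_derivative - Mv n (\<lambda>j. z j t) i) (at t)"
  and dz: "\<And>i t. i\<in>{1..n} \<Longrightarrow> t > t1 \<Longrightarrow>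
      (z i has_real_derivative a * e i t - b * Mv n (\<lambda>j. z j t) i) (at t)"
  and sz: "\<And>t. t > t1 \<Longrightarrow> (\<Sum>i\<in>{1..n}. z i t) = 0"
  shows "\<forall>i\<in>{1..n}. (e i \<longlongrightarrow> 0) at_top \<and> (z i \<longlongrightarrow> 0) at_top"
proof -
  define \<mu> where "\<mu> = 1 / (2 * real n ^ 2)"
  have \<mu>: "\<mu> > 0" using n by (simp add: \<mu>_def)
  define M where "M t = Mv n (\<lambda>j. z j t)" for t
  define P where "P t = SS n (\<lambda>j. e j t) (\<lambda>j. e j t)" for t
  define Q where "Q t = SS n (\<lambda>j. z j t) (M t)" for t
  define R where "R t = SS n (\<lambda>j. e j t) (\<lambda>j. z j t)" for t
  define X where "X t = SS n (\<lambda>j. e j t) (M t)" for t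
  define Y where "Y t = SS n (M t) (M t)" for t
  define SZ where "SZ t = SS n (\<lambda>j. z j t) (\<lambda>j. z j t)" for t
  have P0: "P t \<ge> 0" for t unfolding P_def by (rule SS_self_nonneg)
  have Y0: "Y t \<ge> 0" for t unfolding Y_def by (rule SS_self_nonneg)
  have SZ0: "SZ t \<ge> 0" for t unfolding SZ_def by (rule SS_self_nonneg)
  have Q0: "Q t \<ge> 0" for t unfolding Q_def M_def by (rule SS_Mv_nonneg[OF n])
  have pc: "\<mu> * SZ t \<le> Q t" if "t > t1" for t
  proof -
    have "SZ t \<le> 2 * real n ^ 2 * Q t"
      unfolding SZ_def Q_def M_def by (rule poincare[OF n sz[OF that]])
    thus ?thesis using n by (simp add: \<mu>_def field_simps)
  qed
  have mq: "\<mu> * Q t \<le> Y t" if "t > t1" for t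
  proof (cases "Q t = 0")
    case True thus ?thesis using Y0[of t] by simp
  next
    case False
    hence Qp: "Q t > 0" using Q0[of t] by simp
    have "(Q t)^2 \<le> SZ t * Y t" unfolding Q_def SZ_def Y_def by (rule SS_CS)
    also have "\<dots> \<le> (Q t / \<mu>) * Y t"
      using pc[OF that] \<mu> Y0[of t] by (intro mult_right_mono) (auto simp: field_simps)
    finally have "Q t * Q t \<le> Q t * (Y t / \<mu>)" by (simp add: power2_eq_square)
    hence "Q t \<le> Y t / \<mu>" using Qp by (rule mult_left_le_imp_le)
    thus ?thesis using \<mu> by (simp add: field_simps)
  qed
  define \<epsilon> where "\<epsilon> = min 1 (min (a/b) (min (b*\<mu>/4) (a*\<mu>/4)))"
  have \<epsilon>: "\<epsilon> > 0" "\<epsilon> \<le> 1" "\<epsilon> \<le> a/b" "\<epsilon> \<le> b*\<mu>/4" "\<epsilon> \<le> a*\<mu>/4"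
  proof -
    have p: "0 < a/b" "0 < b*\<mu>/4" "0 < a*\<mu>/4" using a b \<mu> by auto
    show "\<epsilon> > 0" unfolding \<epsilon>_def using p by simp
    show "\<epsilon> \<le> 1" unfolding \<epsilon>_def by (rule min.cobounded1)
    show "\<epsilon> \<le> a/b" unfolding \<epsilon>_def by (meson min.cobounded1 min.cobounded2 order_trans)
    show "\<epsilon> \<le> b*\<mu>/4" unfolding \<epsilon>_def by (meson min.cobounded1 min.cobounded2 order_trans)
    show "\<epsilon> \<le> a*\<mu>/4" unfolding \<epsilon>_def by (meson min.cobounded1 min.cobounded2 order_trans)
  qed
  define V where "V t = a * P t + Q t - 2 * \<epsilon> * R t" for t
  define W where "W t = a * P t + Q t" for t
  have W0: "W t \<ge> 0" for t using P0[of t] Q0[of t] a by (simp add: W_def)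
  have dV: "(V has_real_derivative
      (-2*b*Y t + 2*\<epsilon>*Q t - 2*\<epsilon>*a*P t + 2*\<epsilon>*b*X t)) (at t)" if t: "t > t1" for t
  proof -
    define Zp where "Zp = (\<lambda>j. a * e j t - b * M t j)"
    have dE: "((\<lambda>s. e i s) has_real_derivative (\<lambda>j. - M t j) i) (at t)" if "i \<in> {1..n}" for i
      using de[OF that t] by (simp add: M_def)
    have dZ: "((\<lambda>s. z i s) has_real_derivative Zp i) (at t)" if "i \<in> {1..n}" for i
      using dz[OF that t] by (simp add: M_def Zp_def)
    have dM: "((\<lambda>s. M s i) has_real_derivative Mv n Zp i) (at t)" if "i \<in> {1..n}" for i
      unfolding M_def by (rule Mv_deriv[OF n that dZ])
    have dP: "(P has_real_derivative SS n (\<lambda>j. - M t j) (\<lambda>j. e j t) + SS n (\<lambda>j. e j t) (\<lambda>j. - M t j)) (at t)"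
      unfolding P_def by (rule SS_deriv[OF dE dE])
    have dQ: "(Q has_real_derivative SS n Zp (\<lambda>j. M t j) + SS n (\<lambda>j. z j t) (Mv n Zp)) (at t)"
      unfolding Q_def using SS_deriv[of n z Zp t UNIV "\<lambda>j s. M s j" "Mv n Zp", OF dZ dM] by simp
    have dR: "(R has_real_derivative SS n (\<lambda>j. - M t j) (\<lambda>j. z j t) + SS n (\<lambda>j. e j t) Zp) (at t)"
      unfolding R_def by (rule SS_deriv[OF dE dZ])
    have v1: "SS n (\<lambda>j. - M t j) (\<lambda>j. e j t) + SS n (\<lambda>j. e j t) (\<lambda>j. - M t j) = -2 * X t"
      by (simp add: SS_minus_left SS_minus_right X_def SS_comm[of n "M t"])
    have v2: "SS n Zp (\<lambda>j. M t j) = a * X t - b * Y t"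
      unfolding Zp_def by (simp add: SS_diff_left SS_scale_left X_def Y_def)
    have MZp: "Mv n Zp = (\<lambda>i. a * Mv n (\<lambda>j. e j t) i - b * Mv n (M t) i)"
      by (rule ext) (simp add: Zp_def Mv_def field_simps)
    have v3: "SS n (\<lambda>j. z j t) (Mv n Zp) = a * X t - b * Y t"
      unfolding MZp
      by (simp add: SS_diff_right SS_scale_right SS_sym[OF n] X_def Y_def M_def SS_comm[of n "\<lambda>j. e j t"])
    have v4: "SS n (\<lambda>j. - M t j) (\<lambda>j. z j t) + SS n (\<lambda>j. e j t) Zp = - Q t + a * P t - b * X t"
      unfolding Zp_def
      by (simp add: SS_minus_left SS_diff_right SS_scale_right Q_def P_def X_def SS_comm[of n "M t"])
    have "(V has_real_derivative a * (-2 * X t) + ((a * X t - b * Y t) + (a * X t - b * Y t))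
            - 2 * \<epsilon> * (- Q t + a * P t - b * X t)) (at t)"
      unfolding V_def[abs_def]
      by (intro DERIV_diff DERIV_add DERIV_cmult) (use dP dQ dR v1 v2 v3 v4 in auto)
    thus ?thesis by (simp add: algebra_simps)
  qed
  have i1: "2*b*X t \<le> a*P t + b^2/a * Y t" for t
  proof -
    have "0 \<le> SS n (\<lambda>j. a * e j t - b * M t j) (\<lambda>j. a * e j t - b * M t j)" by (rule SS_self_nonneg)
    also have "\<dots> = a^2 * P t - 2*a*b*X t + b^2 * Y t"
      by (simp add: SS_quad2 P_def X_def Y_def)
    finally have f: "0 \<le> a^2 * P t - 2*a*b*X t + b^2 * Y t" .
    have eq: "(a*P t + b^2/a * Y t) * a = a^2 * P t + b^2 * Y t" using a by (simp add: field_simps power2_eq_square)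
    have "2*b*X t * a \<le> (a*P t + b^2/a * Y t) * a" unfolding eq using f by (simp add: algebra_simps)
    thus ?thesis using a by (simp add: mult_le_cancel_right_pos)
  qed
  have Rb: "2*\<epsilon>*\<bar>R t\<bar> \<le> a/2 * P t + 2*\<epsilon>^2/a * SZ t" for t
  proof -
    define c where "c = 2*\<epsilon>/a"
    have c: "c > 0" using \<epsilon> a by (simp add: c_def)
    have q1: "0 \<le> P t + 2*c*R t + c^2 * SZ t"
      using SS_self_nonneg[of n "\<lambda>j. e j t + c * z j t"] by (simp add: SS_quad P_def R_def SZ_def)
    have q2: "0 \<le> P t + 2*(-c)*R t + (-c)^2 * SZ t"
      using SS_self_nonneg[of n "\<lambda>j. e j t + (-c) * z j t"] by (simp only: SS_quad P_def R_def SZ_def)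
    have "2*c*\<bar>R t\<bar> \<le> P t + c^2 * SZ t" using q1 q2 c by (cases "R t \<ge> 0") auto
    hence h: "a/2 * (2*c*\<bar>R t\<bar>) \<le> a/2 * (P t + c^2 * SZ t)" using a by (simp add: mult_left_mono)
    have e1: "a/2 * (2*c*\<bar>R t\<bar>) = 2*\<epsilon>*\<bar>R t\<bar>" using a by (simp add: c_def field_simps)
    have e2: "a/2 * (P t + c^2 * SZ t) = a/2 * P t + 2*\<epsilon>^2/a * SZ t"
      using a by (simp add: c_def field_simps power2_eq_square)
    show ?thesis using h e1 e2 by linarith
  qed
  have SZb: "2*\<epsilon>^2/a * SZ t \<le> Q t / 2" if t: "t > t1" for t
  proof -
    have "\<epsilon>*\<epsilon> \<le> \<epsilon>*1" using \<epsilon> by (intro mult_left_mono) auto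
    hence "\<epsilon>^2 \<le> a*\<mu>/4" using \<epsilon>(5) unfolding power2_eq_square by linarith
    hence "2*\<epsilon>^2/a \<le> \<mu>/2" using a by (simp add: field_simps)
    hence "2*\<epsilon>^2/a * SZ t \<le> \<mu>/2 * SZ t" using SZ0[of t] by (rule mult_right_mono)
    thus ?thesis using pc[OF t] by simp
  qed
  have VW: "W t / 2 \<le> V t \<and> V t \<le> 3 * W t / 2" if t: "t > t1" for t
  proof -
    have r1: "2*\<epsilon>*R t \<le> 2*\<epsilon>*\<bar>R t\<bar>" using \<epsilon> by (intro mult_left_mono) auto
    have r2: "-(2*\<epsilon>*\<bar>R t\<bar>) \<le> 2*\<epsilon>*R t" using \<epsilon> mult_left_mono[of "-\<bar>R t\<bar>" "R t" "2*\<epsilon>"] by auto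
    have r3: "a/2 * P t = (a * P t)/2" by simp
    have h1: "2*\<epsilon>*\<bar>R t\<bar> \<le> (a * P t)/2 + 2*\<epsilon>^2/a * SZ t" using Rb[of t] r3 by simp
    show ?thesis unfolding V_def W_def
      using gen_ineq[OF h1 SZb[OF t] r1 r2] by simp
  qed
  define \<gamma> where "\<gamma> = min (b*\<mu>/2) \<epsilon>"
  have \<gamma>: "\<gamma> > 0" using b \<mu> \<epsilon> by (simp add: \<gamma>_def)
  have dVle: "-2*b*Y t + 2*\<epsilon>*Q t - 2*\<epsilon>*a*P t + 2*\<epsilon>*b*X t \<le> - \<gamma> * W t" if t: "t > t1" for t
  proof -
    have s1: "2*\<epsilon>*b*X t \<le> \<epsilon>*(a*P t) + \<epsilon>*(b^2/a) * Y t"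
      using mult_left_mono[OF i1[of t], of \<epsilon>] \<epsilon> by (simp add: algebra_simps)
    have "\<epsilon>*(b^2/a) \<le> (a/b)*(b^2/a)" using \<epsilon> a b by (intro mult_right_mono) auto
    also have "\<dots> = b" using a b by (simp add: field_simps power2_eq_square)
    finally have "\<epsilon>*(b^2/a) * Y t \<le> b * Y t" using Y0[of t] by (rule mult_right_mono)
    with s1 have s2: "-2*b*Y t + 2*\<epsilon>*Q t - 2*\<epsilon>*a*P t + 2*\<epsilon>*b*X t \<le> -b*Y t + 2*\<epsilon>*Q t - \<epsilon>*a*P t"
      by (simp add: algebra_simps)
    have "b*(\<mu>*Q t) \<le> b*Y t" using mq[OF t] b by (simp add: mult_left_mono)
    moreover have "2*\<epsilon>*Q t \<le> (b*\<mu>/2)*Q t" using \<epsilon> Q0[of t] by (intro mult_right_mono) auto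
    moreover have "\<gamma>*Q t \<le> (b*\<mu>/2)*Q t" using Q0[of t] by (intro mult_right_mono) (auto simp: \<gamma>_def)
    moreover have "\<gamma>*(a*P t) \<le> \<epsilon>*(a*P t)" using P0[of t] a by (intro mult_right_mono) (auto simp: \<gamma>_def)
    ultimately show ?thesis using s2 by (simp add: W_def algebra_simps)
  qed
  define \<delta> where "\<delta> = 2*\<gamma>/3"
  have \<delta>: "\<delta> > 0" using \<gamma> by (simp add: \<delta>_def)
  have "\<exists>C. \<forall>t\<ge>t1+1. V t \<le> C * exp (- \<delta> * t)"
  proof (rule exp_decay[OF dV])
    fix t assume t: "t > t1"
    have "\<delta> * V t \<le> \<gamma> * W t" using VW[OF t] \<gamma> by (simp add: \<delta>_def)
    thus "-2*b*Y t + 2*\<epsilon>*Q t - 2*\<epsilon>*a*P t + 2*\<epsilon>*b*X t \<le> - \<delta> * V t" using dVle[OF t] by simp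
  qed
  then obtain C where C: "\<And>t. t \<ge> t1+1 \<Longrightarrow> V t \<le> C * exp (- \<delta> * t)" by blast
  show ?thesis
  proof
    fix i assume i: "i \<in> {1..n}"
    show "(e i \<longlongrightarrow> 0) at_top \<and> (z i \<longlongrightarrow> 0) at_top"
    proof
      show "(e i \<longlongrightarrow> 0) at_top"
      proof (rule sq_to_zero[OF \<delta>, of "t1+1" _ "2*C/a"])
        fix t assume t: "t \<ge> t1+1"
        have "(e i t)^2 \<le> P t" unfolding P_def by (rule sq_le_SS[OF i])
        moreover have "a * P t \<le> W t" using Q0[of t] by (simp add: W_def)
        moreover have "W t \<le> 2 * V t" using VW[of t] t by simp
        moreover note C[OF t]
        ultimately have "a * (e i t)^2 \<le> 2 * (C * exp (- \<delta> * t))"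
          using a mult_left_mono[of "(e i t)^2" "P t" a] by linarith
        thus "(e i t)^2 \<le> 2*C/a * exp (- \<delta> * t)" using a by (simp add: field_simps)
      qed
      show "(z i \<longlongrightarrow> 0) at_top"
      proof (rule sq_to_zero[OF \<delta>, of "t1+1" _ "2*C/\<mu>"])
        fix t assume t: "t \<ge> t1+1"
        have "(z i t)^2 \<le> SZ t" unfolding SZ_def by (rule sq_le_SS[OF i])
        moreover have "\<mu> * SZ t \<le> Q t" using pc[of t] t by simp
        moreover have "Q t \<le> W t" using P0[of t] a by (simp add: W_def)
        moreover have "W t \<le> 2 * V t" using VW[of t] t by simp
        moreover note C[OF t]
        ultimately have "\<mu> * (z i t)^2 \<le> 2 * (C * exp (- \<delta> * t))"
          using \<mu> mult_left_mono[of "(z i t)^2" "SZ t" \<mu>] by linarith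
        thus "(z i t)^2 \<le> 2*C/\<mu> * exp (- \<delta> * t)" using \<mu> by (simp add: field_simps)
      qed
    qed
  qed
qed



lemma bij_pv: "n \<ge> 2 \<Longrightarrow> bij_betw (pv n) {1..n} {1..n}"
  by (rule bij_betw_byWitness[where f'="nx n"]) (auto simp: pv_nx nx_pv dest: nx_in pv_in)

lemma sum_pv: "n \<ge> 2 \<Longrightarrow> (\<Sum>i\<in>{1..n}. f (pv n i)) = (\<Sum>i\<in>{1..n}. (f i :: real))"
  using sum.reindex_bij_betw[OF bij_pv, of n f] by simp

lemma sum_Mv: "n \<ge> 2 \<Longrightarrow> (\<Sum>i\<in>{1..n}. Mv n x i) = 0"
  using sum_nx[of n x] sum_pv[of n x]
  by (simp add: Mv_def sum_subtractf sum.distrib flip: sum_divide_distrib)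

lemma phibar_eq:
  assumes n: "n \<ge> 2" and i: "i \<in> {1..n}"
  shows "phibar n phi i t = (phi (nx n i) t + phi (pv n i) t) / 2
           + ((if i = 1 then - pi else 0) + (if i = n then pi else 0))"
  using n i by (auto simp: phibar_def nx_def pv_def field_simps eval_nat_numeral)

lemma at_t0: "t > t0 \<Longrightarrow> at t within {t0..} = at (t::real)"
  by (rule at_within_interior) (simp add: interior_Ici[of "t0 - 1"])

theorem corollary1:
  fixes n k :: nat and k_phi k_omega t0 :: real
    and xi :: "nat \<Rightarrow> real"
    and phi omega :: "nat \<Rightarrow> real \<Rightarrow> real"
  assumes n: "n \<ge> 2"
    and gains: "k_phi > 0" "k_omega > 0"
    and k: "k \<in> {1..n}" "xi k > 0"
    and xi_zero: "\<And>i. i \<in> {1..n} \<Longrightarrow> i \<noteq> k \<Longrightarrow> xi i = 0"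
    and omega_init: "\<And>i. i \<in> {1..n} \<Longrightarrow> omega i t0 = 0"
    and omega_ode: "\<And>i t. i \<in> {1..n} \<Longrightarrow> t \<ge> t0 \<Longrightarrow>
        (omega i has_real_derivative k_omega * (phibar n phi i t - phi i t)) (at t within {t0..})"
    and phi_ode: "\<And>i t. i \<in> {1..n} \<Longrightarrow> t \<ge> t0 \<Longrightarrow>
        (phi i has_real_derivative
           omega i t + k_phi * (phibar n phi i t - phi i t) + xi i) (at t within {t0..})"
  shows "\<forall>i\<in>{1..n}.
           ((\<lambda>t. phi i t - phibar n phi i t) \<longlongrightarrow> 0) at_top \<and>
           ((\<lambda>t. deriv (phi i) t) \<longlongrightarrow> xi k / real n) at_top"
proof -
  define c where "c = xi k / real n"
  define bb where "bb i = (if i = 1 then - pi else 0) + (if i = n then pi else (0::real))" for i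
  define e where "e i t = phibar n phi i t - phi i t" for i t
  define z where "z i t = omega i t + k_phi * e i t + xi i - c" for i t
  have e_eq: "e i t = - Mv n (\<lambda>j. phi j t) i + bb i" if "i \<in> {1..n}" for i t
    using phibar_eq[OF n that, of phi t] by (simp add: e_def Mv_def bb_def)
  have dphi: "(phi i has_real_derivative z i t + c) (at t)" if "i \<in> {1..n}" "t > t0" for i t
    using phi_ode[OF that(1), of t] that(2) by (simp add: at_t0 z_def e_def)
  have dom: "(omega i has_real_derivative k_omega * e i t) (at t)" if "i \<in> {1..n}" "t > t0" for i t
    using omega_ode[OF that(1), of t] that(2) by (simp add: at_t0 e_def)
  have de: "(e i has_real_derivative - Mv n (\<lambda>j. z j t) i) (at t)" if i: "i \<in> {1..n}" and t: "t > t0" for i t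
  proof -
    have ev: "e i = (\<lambda>s. - Mv n (\<lambda>j. phi j s) i + bb i)" using e_eq[OF i] by auto
    have "((\<lambda>s. - Mv n (\<lambda>j. phi j s) i + bb i) has_real_derivative - Mv n (\<lambda>j. z j t + c) i + 0) (at t)"
      by (intro DERIV_add DERIV_minus DERIV_const Mv_deriv[OF n i] dphi t)
    moreover have "Mv n (\<lambda>j. z j t + c) i = Mv n (\<lambda>j. z j t) i" by (simp add: Mv_def field_simps)
    ultimately show ?thesis using ev by simp
  qed
  have dz: "(z i has_real_derivative k_omega * e i t - k_phi * Mv n (\<lambda>j. z j t) i) (at t)"
    if i: "i \<in> {1..n}" and t: "t > t0" for i t
  proof -
    have "((\<lambda>s. omega i s + k_phi * e i s + xi i - c) has_real_derivative
        k_omega * e i t + k_phi * (- Mv n (\<lambda>j. z j t) i) + 0 - 0) (at t)"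
      by (intro DERIV_add DERIV_diff DERIV_cmult DERIV_const dom[OF i t] de[OF i t])
    thus ?thesis by (simp add: z_def[abs_def])
  qed
  have sume: "(\<Sum>i\<in>{1..n}. e i t) = 0" for t
  proof -
    have "(\<Sum>i\<in>{1..n}. e i t) = (\<Sum>i\<in>{1..n}. - Mv n (\<lambda>j. phi j t) i + bb i)"
      by (rule sum.cong) (auto simp: e_eq)
    also have "\<dots> = - (\<Sum>i\<in>{1..n}. Mv n (\<lambda>j. phi j t) i) + (\<Sum>i\<in>{1..n}. bb i)"
      by (simp add: sum.distrib sum_negf sum_subtractf)
    also have "(\<Sum>i\<in>{1..n}. bb i) = 0" using n by (simp add: bb_def sum.distrib)
    finally show ?thesis using sum_Mv[OF n, of "\<lambda>j. phi j t"] by simp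
  qed
  have sumom: "(\<Sum>i\<in>{1..n}. omega i t) = 0" if t: "t > t0" for t
  proof -
    have "(\<lambda>s. \<Sum>i\<in>{1..n}. omega i s) t = (\<lambda>s. \<Sum>i\<in>{1..n}. omega i s) t0"
    proof (rule DERIV_isconst_end[OF t])
      show "continuous_on {t0..t} (\<lambda>s. \<Sum>i\<in>{1..n}. omega i s)"
      proof (intro continuous_on_sum)
        fix i assume i: "i \<in> {1..n}"
        show "continuous_on {t0..t} (omega i)"
          by (rule DERIV_continuous_on, rule DERIV_subset[OF omega_ode[OF i]]) auto
      qed
      fix x assume x: "t0 < x" "x < t"
      have "((\<lambda>s. \<Sum>i\<in>{1..n}. omega i s) has_real_derivative (\<Sum>i\<in>{1..n}. k_omega * e i x)) (at x)"
        by (rule DERIV_sum) (rule dom, use x in auto)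
      then show "((\<lambda>s. \<Sum>i\<in>{1..n}. omega i s) has_real_derivative 0) (at x)"
      proof -
        have "(\<Sum>i\<in>{1..n}. k_omega * e i x) = k_omega * (\<Sum>i\<in>{1..n}. e i x)"
          by (rule sum_distrib_left[symmetric])
        also have "\<dots> = 0" by (simp only: sume mult_zero_right)
        finally show ?thesis using \<open>((\<lambda>s. \<Sum>i\<in>{1..n}. omega i s) has_real_derivative (\<Sum>i\<in>{1..n}. k_omega * e i x)) (at x)\<close>
          by (simp only:)
      qed
    qed
    thus ?thesis using omega_init by simp
  qed
  have sumxi: "(\<Sum>i\<in>{1..n}. xi i) = xi k"
    using k(1) by (subst sum.remove[of _ k]) (auto intro!: sum.neutral xi_zero)
  have sz: "(\<Sum>i\<in>{1..n}. z i t) = 0" if t: "t > t0" for t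
  proof -
    have "(\<Sum>i\<in>{1..n}. z i t) = (\<Sum>i\<in>{1..n}. omega i t) + k_phi * (\<Sum>i\<in>{1..n}. e i t)
            + (\<Sum>i\<in>{1..n}. xi i) - real n * c"
      by (simp add: z_def sum.distrib sum_subtractf sum_distrib_left)
    also have "\<dots> = 0" unfolding sumom[OF t] sume sumxi using n by (simp add: c_def)
    finally show ?thesis .
  qed
  have L: "\<forall>i\<in>{1..n}. (e i \<longlongrightarrow> 0) at_top \<and> (z i \<longlongrightarrow> 0) at_top"
    by (rule lyap[OF n gains(2) gains(1) de dz sz])
  show ?thesis
  proof
    fix i assume i: "i \<in> {1..n}"
    have "((\<lambda>t. - e i t) \<longlongrightarrow> - 0) at_top" using L i by (intro tendsto_minus) auto
    hence 1: "((\<lambda>t. phi i t - phibar n phi i t) \<longlongrightarrow> 0) at_top" by (simp add: e_def)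
    have "((\<lambda>t. z i t + c) \<longlongrightarrow> 0 + c) at_top" using L i by (intro tendsto_add) auto
    moreover have "\<forall>\<^sub>F t in at_top. z i t + c = deriv (phi i) t"
    proof (rule eventually_at_top_linorderI[of "t0+1"])
      fix x assume "t0 + 1 \<le> x"
      hence "x > t0" by simp
      from DERIV_imp_deriv[OF dphi[OF i this]] show "z i x + c = deriv (phi i) x" by simp
    qed
    ultimately have 2: "((\<lambda>t. deriv (phi i) t) \<longlongrightarrow> xi k / real n) at_top"
      by (simp add: c_def tendsto_cong)
    show "((\<lambda>t. phi i t - phibar n phi i t) \<longlongrightarrow> 0) at_top \<and>
           ((\<lambda>t. deriv (phi i) t) \<longlongrightarrow> xi k / real n) at_top" using 1 2 by blast
  qed
qed

end
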